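(* As formal power series in $z,y$, $$\sum_{p\ge0}\sum_{n\ge p}\mathbb{B}_n^{(-p)}\frac{z^n}{n!}\frac{y^p}{p!}=\exp\big((y+1)(e^z-1)\big).$$
   Context: For an integer $p\ge0$, the poly-Bell numbers $\mathbb{B}_n^{(-p)}$ ($n\ge0$) are defined by the exponential generating function $\sum_{n\ge0}\mathbb{B}_n^{(-p)}\frac{z^n}{n!}=\sum_{n\ge p}\frac{(e^z-1)^n}{(n-p)!}$. *)

theory Defs
  imports "HOL-Analysis.Analysis" "HOL-Computational_Algebra.Formal_Power_Series"
begin

text \<open>Poly-Bell numbers: n! times the coefficient of z^n in the formal sum
  sum_{k >= p} (e^z - 1)^k / (k - p)!, the formal sum being taken coefficientwise
  (only finitely many terms contribute to each coefficient).\<close>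
definition polyBell :: "nat \<Rightarrow> nat \<Rightarrow> real" where
  "polyBell p n = fact n * (\<Sum>\<^sub>\<infinity> k\<in>{p..}. fps_nth ((fps_exp 1 - 1) ^ k) n / fact (k - p))"

text \<open>Bivariate formal power series in z (outer) and y (inner): type real fps fps.
  The coefficient of z^n y^p is fps_nth (fps_nth F n) p.\<close>

definition polyBell_bgf :: "real fps fps" where
  "polyBell_bgf = Abs_fps (\<lambda>n. Abs_fps (\<lambda>p.
      if p \<le> n then polyBell p n / (fact n * fact p) else 0))"

definition exp_series2 :: "real fps fps" where
  "exp_series2 = Abs_fps (\<lambda>k. fps_const (1 / fact k))"

definition y_var :: "real fps fps" where
  "y_var = fps_const fps_X"

end

theory Submission
  imports Defs
begin

unbundle no vec_syntax
unbundle fps_syntax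

definition liftc :: "real fps \<Rightarrow> real fps fps" where
  "liftc f = Abs_fps (\<lambda>n. fps_const (f $ n))"

lemma fps_const_sum': "fps_const (sum f A) = (\<Sum>x\<in>A. fps_const (f x) :: real fps)"
  by (rule fps_ext) (simp add: fps_sum_nth)

lemma liftc_mult: "liftc (f * g) = liftc f * liftc g"
  by (simp add: liftc_def fps_eq_iff fps_mult_nth fps_const_sum')

lemma liftc_one: "liftc 1 = 1"
  by (simp add: liftc_def fps_eq_iff)

lemma liftc_power: "liftc (f ^ k) = liftc f ^ k"
  by (induction k) (simp_all add: liftc_one liftc_mult)

lemma E_lift: "exp_series2 - 1 = liftc (fps_exp 1 - 1)"
  by (simp add: liftc_def exp_series2_def fps_eq_iff)

lemma Epow_nth: "(fps_exp (1::real) - 1) ^ k $ n = 0" if "n < k"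
  using startsby_zero_power_prefix[of "fps_exp (1::real) - 1" k] that by simp

lemma binom_nth: "((fps_X + 1 :: real fps) ^ i) $ p = of_nat (i choose p)"
proof -
  have "(fps_X + 1 :: real fps) ^ i = fps_binomial (of_nat i)"
    by (simp add: fps_binomial_of_nat add.commute)
  then show ?thesis by (simp add: binomial_gbinomial)
qed

theorem mainTheorem12:
  shows "polyBell_bgf = exp_series2 oo ((y_var + 1) * (exp_series2 - 1))"
proof (rule fps_ext)
  fix n
  let ?E = "fps_exp (1::real) - 1"
  have G: "((y_var + 1) * (exp_series2 - 1)) ^ i $ n = (fps_X + 1) ^ i * fps_const (?E ^ i $ n)" for i
  proof -
    have "y_var + 1 = fps_const (fps_X + 1)" by (simp add: y_var_def)
    then have "((y_var + 1) * (exp_series2 - 1)) ^ i = fps_const ((fps_X + 1) ^ i) * liftc (?E ^ i)"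
      by (simp add: E_lift liftc_power power_mult_distrib fps_const_power)
    then show ?thesis by (simp add: liftc_def)
  qed
  have R: "(exp_series2 oo ((y_var + 1) * (exp_series2 - 1))) $ n
      = (\<Sum>i=0..n. fps_const (1 / fact i * ?E ^ i $ n) * (fps_X + 1) ^ i)"
    unfolding fps_compose_nth G by (intro sum.cong) (auto simp: exp_series2_def mult_ac)
  show "polyBell_bgf $ n = (exp_series2 oo ((y_var + 1) * (exp_series2 - 1))) $ n"
  proof (rule fps_ext)
    fix p
    have rhs: "(exp_series2 oo ((y_var + 1) * (exp_series2 - 1))) $ n $ p
        = (\<Sum>i=0..n. 1 / fact i * ?E ^ i $ n * of_nat (i choose p))"
      unfolding R fps_sum_nth by (simp add: binom_nth)
    show "polyBell_bgf $ n $ p = (exp_series2 oo ((y_var + 1) * (exp_series2 - 1))) $ n $ p"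
    proof (cases "p \<le> n")
      case True
      have inf: "(\<Sum>\<^sub>\<infinity> k\<in>{p..}. ?E ^ k $ n / fact (k - p)) = (\<Sum>k=p..n. ?E ^ k $ n / fact (k - p))"
      proof -
        have "(\<Sum>\<^sub>\<infinity> k\<in>{p..}. ?E ^ k $ n / fact (k - p)) = (\<Sum>\<^sub>\<infinity> k\<in>{p..n}. ?E ^ k $ n / fact (k - p))"
          by (rule infsum_cong_neutral) (auto simp: Epow_nth)
        then show ?thesis by simp
      qed
      have "(\<Sum>i=0..n. 1 / fact i * ?E ^ i $ n * of_nat (i choose p))
          = (\<Sum>i=p..n. 1 / fact i * ?E ^ i $ n * of_nat (i choose p))"
        by (rule sum.mono_neutral_right) (auto)
      also have "\<dots> = (\<Sum>i=p..n. ?E ^ i $ n / fact (i - p) / fact p)"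
        by (rule sum.cong) (auto simp: binomial_fact field_simps)
      also have "\<dots> = (\<Sum>i=p..n. ?E ^ i $ n / fact (i - p)) / fact p"
        by (simp add: sum_divide_distrib)
      finally show ?thesis using True
        by (simp add: rhs polyBell_bgf_def polyBell_def inf)
    next
      case False
      have "(\<Sum>i=0..n. 1 / fact i * ?E ^ i $ n * of_nat (i choose p)) = 0"
        by (rule sum.neutral) (use False in auto)
      then show ?thesis using False by (simp add: rhs polyBell_bgf_def)
    qed
  qed
qed

end
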